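(* Let $\Gamma=\{f_1,f_2,f_3\}$ be a smooth solution on $(0,T)\times I$ of $\partial_tf_i=-\nabla_s^2\vec\kappa_i-\tfrac12|\vec\kappa_i|^2\vec\kappa_i+\lambda_i\vec\kappa_i+\varphi_i\partial_sf_i$ with $\vec\kappa_i(t,0)=0$, and with initial data satisfying $f_1(0,0)=f_2(0,0)=f_3(0,0)$. Then $f_1(t,0)=f_2(t,0)=f_3(t,0)$ for all $t$ if and only if $\partial_tf_i(t,0)=\partial_tf_j(t,0)$ for all $t$ and all $i,j$. In that case, writing $A_i=\nabla_s^2\vec\kappa_i(t,0)$, $T_i=\partial_sf_i(t,0)$, $T_{ij}=\langle T_i,T_j\rangle$ and $\varphi_i=\varphi_i(t,0)$, the vector $(\varphi_1,\varphi_2,\varphi_3)$ solves $$M\begin{pmatrix}\varphi_1\\\varphi_2\\\varphi_3\end{pmatrix}=\begin{pmatrix}-\langle A_2+A_3,T_1\rangle\\-\langle A_1+A_3,T_2\rangle\\-\langle A_1+A_2,T_3\rangle\end{pmatrix},\qquad M=\begin{pmatrix}2&-T_{12}&-T_{13}\\-T_{12}&2&-T_{23}\\-T_{13}&-T_{23}&2\end{pmatrix}.$$ Moreover, for any unit vectors $T_1,T_2,T_3\in\mathbb{R}^n$, $\det M=8-2(T_{12}^2+T_{23}^2+T_{13}^2)-2T_{12}T_{23}T_{13}\ge2(1-T_{12}T_{23}T_{13})\ge0$, with $\det M=0$ if and only if $T_1=T_2=T_3$ or $T_i=T_{i+1}$ and $T_{i+2}=-T_i$ for some $i$ (indices mod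 3); in particular $M$ is positive definite whenever $\dim\operatorname{span}\{T_1,T_2,T_3\}\ge2$.
   Context: $I=[0,1]$; $ds=|\partial_xf_i|dx$, $\partial_s=|\partial_xf_i|^{-1}\partial_x$, $\vec\kappa_i=\partial_s^2f_i$, $\nabla_s\phi=\partial_s\phi-\langle\partial_s\phi,\partial_sf_i\rangle\partial_sf_i$; $\lambda_i$ constants, $\varphi_i$ smooth scalar functions. *)

theory Defs
  imports "HOL-Analysis.Analysis"
begin

definition dx :: "(real \<Rightarrow> real \<Rightarrow> 'a::real_normed_vector) \<Rightarrow> real \<Rightarrow> real \<Rightarrow> 'a" where
  "dx g t x = vector_derivative (\<lambda>y. g t y) (at x)"

definition dt :: "(real \<Rightarrow> real \<Rightarrow> 'a::real_normed_vector) \<Rightarrow> real \<Rightarrow> real \<Rightarrow> 'a" where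
  "dt g t x = vector_derivative (\<lambda>s. g s x) (at t)"

fun partials :: "bool list \<Rightarrow> (real \<Rightarrow> real \<Rightarrow> 'a::real_normed_vector) \<Rightarrow> real \<Rightarrow> real \<Rightarrow> 'a" where
  "partials [] g = g"
| "partials (b # bs) g = (if b then dt else dx) (partials bs g)"

definition smooth_on2 :: "(real \<times> real) set \<Rightarrow> (real \<Rightarrow> real \<Rightarrow> 'a::real_normed_vector) \<Rightarrow> bool" where
  "smooth_on2 U g \<longleftrightarrow> (\<forall>bs. \<forall>p\<in>U. (\<lambda>q. partials bs g (fst q) (snd q)) differentiable (at p))"

definition ds :: "(real \<Rightarrow> real \<Rightarrow> 'a::real_inner) \<Rightarrow> (real \<Rightarrow> real \<Rightarrow> 'a) \<Rightarrow> real \<Rightarrow> real \<Rightarrow> 'a" where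
  "ds f g t x = (1 / norm (dx f t x)) *\<^sub>R dx g t x"

definition nabla_s :: "(real \<Rightarrow> real \<Rightarrow> 'a::real_inner) \<Rightarrow> (real \<Rightarrow> real \<Rightarrow> 'a) \<Rightarrow> real \<Rightarrow> real \<Rightarrow> 'a" where
  "nabla_s f g t x = ds f g t x - (ds f g t x \<bullet> ds f f t x) *\<^sub>R ds f f t x"

definition kappa :: "(real \<Rightarrow> real \<Rightarrow> 'a::real_inner) \<Rightarrow> real \<Rightarrow> real \<Rightarrow> 'a" where
  "kappa f = ds f (ds f f)"

definition Mmat :: "'a::real_inner \<Rightarrow> 'a \<Rightarrow> 'a \<Rightarrow> real^3^3" where
  "Mmat T1 T2 T3 = vector [vector [2, -(T1 \<bullet> T2), -(T1 \<bullet> T3)],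
                           vector [-(T1 \<bullet> T2), 2, -(T2 \<bullet> T3)],
                           vector [-(T1 \<bullet> T3), -(T2 \<bullet> T3), 2]]"

definition pos_def_mat :: "real^'n^'n \<Rightarrow> bool" where
  "pos_def_mat M \<longleftrightarrow> transpose M = M \<and> (\<forall>v. v \<noteq> 0 \<longrightarrow> v \<bullet> (M *v v) > 0)"

end

theory Submission
  imports Defs
begin


lemma Mmat_mult_comp:
  fixes T1 T2 T3 :: "'a::real_inner" and w :: "real^3"
  shows "(Mmat T1 T2 T3 *v w)$1 = 2*w$1 - (T1\<bullet>T2)*w$2 - (T1\<bullet>T3)*w$3"
    and "(Mmat T1 T2 T3 *v w)$2 = -(T1\<bullet>T2)*w$1 + 2*w$2 - (T2\<bullet>T3)*w$3"
    and "(Mmat T1 T2 T3 *v w)$3 = -(T1\<bullet>T3)*w$1 - (T2\<bullet>T3)*w$2 + 2*w$3"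
  by (simp_all add: Mmat_def matrix_vector_mult_def sum_3)

lemma det_Mmat:
  fixes T1 T2 T3 :: "'a::real_inner"
  shows "det (Mmat T1 T2 T3) = 8 - 2*((T1\<bullet>T2)^2 + (T2\<bullet>T3)^2 + (T1\<bullet>T3)^2) - 2*(T1\<bullet>T2)*(T2\<bullet>T3)*(T1\<bullet>T3)"
  by (simp add: Mmat_def det_3 power2_eq_square algebra_simps)

lemma transpose_Mmat: "transpose (Mmat T1 T2 T3) = Mmat T1 T2 T3"
  by (simp add: Mmat_def transpose_def vec_eq_iff forall_3 inner_commute)

lemma quad_Mmat:
  fixes T1 T2 T3 :: "'a::real_inner" and w :: "real^3"
  assumes "norm T1 = 1" "norm T2 = 1" "norm T3 = 1"
  shows "w \<bullet> (Mmat T1 T2 T3 *v w) = (norm (w$1 *\<^sub>R T1 - w$2 *\<^sub>R T2))^2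
     + (norm (w$1 *\<^sub>R T1 - w$3 *\<^sub>R T3))^2 + (norm (w$2 *\<^sub>R T2 - w$3 *\<^sub>R T3))^2"
proof -
  have n: "T1 \<bullet> T1 = 1" "T2 \<bullet> T2 = 1" "T3 \<bullet> T3 = 1" using assms by (simp_all add: dot_square_norm)
  show ?thesis
    unfolding power2_norm_eq_inner
    by (simp add: inner_vec_def sum_3 Mmat_mult_comp inner_diff_left inner_diff_right n inner_commute algebra_simps power2_eq_square)
qed

lemma unit_inner_bounds:
  fixes x y :: "'a::real_inner"
  assumes "norm x = 1" "norm y = 1"
  shows "\<bar>x \<bullet> y\<bar> \<le> 1" "x \<bullet> y = 1 \<longleftrightarrow> x = y" "x \<bullet> y = -1 \<longleftrightarrow> y = - x"
proof -
  show "\<bar>x \<bullet> y\<bar> \<le> 1" using Cauchy_Schwarz_ineq2[of x y] assms by simp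
  have xx: "x \<bullet> x = 1" "y \<bullet> y = 1" using assms by (simp_all add: dot_square_norm)
  have "(norm (x - y))^2 = 2 - 2 * (x \<bullet> y)"
    unfolding power2_norm_eq_inner by (simp add: inner_diff_left inner_diff_right xx inner_commute)
  then have "x \<bullet> y = 1 \<longleftrightarrow> (norm (x - y))^2 = 0" by linarith
  then show "x \<bullet> y = 1 \<longleftrightarrow> x = y" by simp
  have "(norm (x + y))^2 = 2 + 2 * (x \<bullet> y)"
    unfolding power2_norm_eq_inner by (simp add: inner_add_left inner_add_right xx inner_commute)
  then have "x \<bullet> y = -1 \<longleftrightarrow> (norm (x + y))^2 = 0" by linarith
  then show "x \<bullet> y = -1 \<longleftrightarrow> y = - x" by (simp add: add_eq_0_iff)
qed

lemma abs3:
  fixes a b c :: real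
  assumes "\<bar>a\<bar> \<le> 1" "\<bar>b\<bar> \<le> 1" "\<bar>c\<bar> \<le> 1"
  shows "a^2 + b^2 + c^2 \<le> 3" "a*b*c \<le> 1"
    "8 - 2*(a^2+b^2+c^2) - 2*a*b*c = 0 \<longleftrightarrow> (a = 1 \<and> b = 1 \<and> c = 1) \<or> (a = 1 \<and> b = -1 \<and> c = -1)
       \<or> (a = -1 \<and> b = 1 \<and> c = -1) \<or> (a = -1 \<and> b = -1 \<and> c = 1)"
proof -
  have a2: "a^2 \<le> 1" "b^2 \<le> 1" "c^2 \<le> 1" using assms by (simp_all add: abs_square_le_1)
  then show "a^2 + b^2 + c^2 \<le> 3" by simp
  have "\<bar>a*b*c\<bar> \<le> 1" using assms by (simp add: abs_mult mult_le_one)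
  then show abc: "a*b*c \<le> 1" by simp
  show "8 - 2*(a^2+b^2+c^2) - 2*a*b*c = 0 \<longleftrightarrow> (a = 1 \<and> b = 1 \<and> c = 1) \<or> (a = 1 \<and> b = -1 \<and> c = -1)
       \<or> (a = -1 \<and> b = 1 \<and> c = -1) \<or> (a = -1 \<and> b = -1 \<and> c = 1)"
  proof
    assume h: "8 - 2*(a^2+b^2+c^2) - 2*a*b*c = 0"
    have h': "8 - 2*(a^2+b^2+c^2) - 2*(a*b*c) = 0" using h by (simp add: mult.assoc)
    have gen: "\<And>p q r u::real. 8-2*(p+q+r)-2*u=0 \<Longrightarrow> p\<le>1 \<Longrightarrow> q\<le>1 \<Longrightarrow> r\<le>1 \<Longrightarrow> u\<le>1 \<Longrightarrow> u=1 \<and> p=1 \<and> q=1 \<and> r=1"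
      by auto
    have "a*b*c = 1 \<and> a^2 = 1 \<and> b^2 = 1 \<and> c^2 = 1" using gen[OF h' a2 abc] .
    then have e4: "a*b*c = 1" and sq: "a^2 = 1" "b^2 = 1" "c^2 = 1" by auto
    from sq have A: "a = 1 \<or> a = -1" "b = 1 \<or> b = -1" "c = 1 \<or> c = -1"
      by (simp_all add: power2_eq_1_iff)
    from A(1) A(2) A(3) e4 show "(a = 1 \<and> b = 1 \<and> c = 1) \<or> (a = 1 \<and> b = -1 \<and> c = -1)
       \<or> (a = -1 \<and> b = 1 \<and> c = -1) \<or> (a = -1 \<and> b = -1 \<and> c = 1)"
      by (elim disjE) simp_all
  qed (elim disjE; simp add: power2_eq_square)
qed

lemma sum3_zero: "(x::real) \<ge> 0 \<Longrightarrow> y \<ge> 0 \<Longrightarrow> z \<ge> 0 \<Longrightarrow> x + y + z = 0 \<Longrightarrow> x = 0 \<and> y = 0"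
  by auto

lemma posdef_Mmat:
  fixes T1 T2 T3 :: "real^'n"
  assumes n: "norm T1 = 1" "norm T2 = 1" "norm T3 = 1"
    and d: "dim (span {T1, T2, T3}) \<ge> 2"
  shows "pos_def_mat (Mmat T1 T2 T3)"
  unfolding pos_def_mat_def
proof (intro conjI allI impI)
  show "transpose (Mmat T1 T2 T3) = Mmat T1 T2 T3" by (rule transpose_Mmat)
  fix w :: "real^3" assume w0: "w \<noteq> 0"
  have ge: "w \<bullet> (Mmat T1 T2 T3 *v w) \<ge> 0" unfolding quad_Mmat[OF n] by simp
  show "w \<bullet> (Mmat T1 T2 T3 *v w) > 0"
  proof (rule ccontr)
    assume "\<not> ?thesis"
    with ge have "w \<bullet> (Mmat T1 T2 T3 *v w) = 0" by simp
    then have "(norm (w$1 *\<^sub>R T1 - w$2 *\<^sub>R T2))^2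
     + (norm (w$1 *\<^sub>R T1 - w$3 *\<^sub>R T3))^2 + (norm (w$2 *\<^sub>R T2 - w$3 *\<^sub>R T3))^2 = 0"
      unfolding quad_Mmat[OF n] .
    then have "(norm (w$1 *\<^sub>R T1 - w$2 *\<^sub>R T2))^2 = 0 \<and> (norm (w$1 *\<^sub>R T1 - w$3 *\<^sub>R T3))^2 = 0"
      using sum3_zero[of "(norm (w$1 *\<^sub>R T1 - w$2 *\<^sub>R T2))^2" "(norm (w$1 *\<^sub>R T1 - w$3 *\<^sub>R T3))^2"
          "(norm (w$2 *\<^sub>R T2 - w$3 *\<^sub>R T3))^2"] by simp
    then have n1: "(norm (w$1 *\<^sub>R T1 - w$2 *\<^sub>R T2))^2 = 0" and n2: "(norm (w$1 *\<^sub>R T1 - w$3 *\<^sub>R T3))^2 = 0"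
      by auto
    from n1 have e1: "w$1 *\<^sub>R T1 = w$2 *\<^sub>R T2" by simp
    from n2 have e2: "w$1 *\<^sub>R T1 = w$3 *\<^sub>R T3" by simp
    note e = e1 e2
    define z where "z = w$1 *\<^sub>R T1"
    have nz: "norm z = \<bar>w$1\<bar>" "norm z = \<bar>w$2\<bar>" "norm z = \<bar>w$3\<bar>"
      using e n unfolding z_def by (metis mult.right_neutral norm_scaleR)+
    have "w$1 \<noteq> 0 \<or> w$2 \<noteq> 0 \<or> w$3 \<noteq> 0" using w0 by (auto simp: vec_eq_iff forall_3)
    then have wn: "w$1 \<noteq> 0" "w$2 \<noteq> 0" "w$3 \<noteq> 0" using nz by auto
    have t1: "T1 = (1 / w$1) *\<^sub>R z" using wn unfolding z_def by simp
    have t2: "T2 = (1 / w$2) *\<^sub>R z" using wn e unfolding z_def by simp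
    have t3: "T3 = (1 / w$3) *\<^sub>R z" using wn unfolding z_def e(2) by simp
    have "T1 \<in> span {z}" "T2 \<in> span {z}" "T3 \<in> span {z}"
      by (subst t1 t2 t3, simp add: span_mul span_base)+
    then have "{T1, T2, T3} \<subseteq> span {z}" by simp
    then have "span {T1, T2, T3} \<subseteq> span {z}" by (metis span_mono span_span)
    then have "dim (span {T1, T2, T3}) \<le> card {z}"
      by (intro dim_le_card) auto
    then show False using d by simp
  qed
qed

lemma det_zero_iff:
  fixes T1 T2 T3 :: "'a::real_inner"
  assumes n: "norm T1 = 1" "norm T2 = 1" "norm T3 = 1"
  shows "det (Mmat T1 T2 T3) = 0 \<longleftrightarrow>
                 (T1 = T2 \<and> T2 = T3) \<or> (T1 = T2 \<and> T3 = - T1)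
               \<or> (T2 = T3 \<and> T1 = - T2) \<or> (T3 = T1 \<and> T2 = - T3)"
proof -
  note ab = unit_inner_bounds[OF n(1,2)] and bc = unit_inner_bounds[OF n(2,3)] and ac = unit_inner_bounds[OF n(1,3)]
  note A = abs3(3)[OF ab(1) bc(1) ac(1)]
  have ca: "T3 \<bullet> T1 = T1 \<bullet> T3" by (simp add: inner_commute)
  have "det (Mmat T1 T2 T3) = 0 \<longleftrightarrow> (T1 \<bullet> T2 = 1 \<and> T2 \<bullet> T3 = 1 \<and> T1 \<bullet> T3 = 1) \<or> (T1 \<bullet> T2 = 1 \<and> T2 \<bullet> T3 = -1 \<and> T1 \<bullet> T3 = -1)
       \<or> (T1 \<bullet> T2 = -1 \<and> T2 \<bullet> T3 = 1 \<and> T1 \<bullet> T3 = -1) \<or> (T1 \<bullet> T2 = -1 \<and> T2 \<bullet> T3 = -1 \<and> T1 \<bullet> T3 = 1)"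
    unfolding det_Mmat A by simp
  also have "\<dots> \<longleftrightarrow> (T1 = T2 \<and> T2 = T3 \<and> T1 = T3) \<or> (T1 = T2 \<and> T3 = - T2 \<and> T3 = - T1)
       \<or> (T2 = - T1 \<and> T2 = T3 \<and> T3 = - T1) \<or> (T2 = - T1 \<and> T3 = - T2 \<and> T1 = T3)"
    unfolding ab(2,3) bc(2,3) ac(2,3) ..
  also have "\<dots> \<longleftrightarrow> (T1 = T2 \<and> T2 = T3) \<or> (T1 = T2 \<and> T3 = - T1)
               \<or> (T2 = T3 \<and> T1 = - T2) \<or> (T3 = T1 \<and> T2 = - T3)"
    by (metis equation_minus_iff)
  finally show ?thesis .
qed


lemma dt_deriv:
  fixes g :: "real \<Rightarrow> real \<Rightarrow> 'a::real_normed_vector"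
  assumes "smooth_on2 U g" "(t, x) \<in> U"
  shows "((\<lambda>s. g s x) has_vector_derivative dt g t x) (at t)"
proof -
  have d: "(\<lambda>q. g (fst q) (snd q)) differentiable (at (t, x))"
    using assms unfolding smooth_on2_def by (metis partials.simps(1))
  have "(\<lambda>s. (s, x)) differentiable (at t)" by (intro derivative_intros)
  then have "((\<lambda>q. g (fst q) (snd q)) \<circ> (\<lambda>s. (s, x))) differentiable (at t)"
    using d by (intro differentiable_chain_at) auto
  then have "(\<lambda>s. g s x) differentiable (at t)" by (simp add: o_def)
  then show ?thesis unfolding dt_def by (simp add: vector_derivative_works)
qed

lemma nabla_perp:
  assumes "norm (ds F F t x) = 1"
  shows "nabla_s F g t x \<bullet> ds F F t x = 0"
proof -
  have "ds F F t x \<bullet> ds F F t x = 1" using assms by (simp add: dot_square_norm)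
  then show ?thesis unfolding nabla_s_def by (simp add: inner_diff_left)
qed

lemma ds_unit:
  assumes "dx F t x \<noteq> 0"
  shows "norm (ds F F t x) = 1"
  using assms unfolding ds_def by simp

theorem mainTheorem10:
  fixes f :: "nat \<Rightarrow> real \<Rightarrow> real \<Rightarrow> real^'n"
    and phi :: "nat \<Rightarrow> real \<Rightarrow> real \<Rightarrow> real"
    and lam :: "nat \<Rightarrow> real"
    and Tm :: real
    and U :: "(real \<times> real) set"
  assumes "Tm > 0"
    and "open U" and "{0<..<Tm} \<times> {0..1} \<subseteq> U"
    and "\<forall>i\<in>{1,2,3}. smooth_on2 U (f i) \<and> smooth_on2 U (phi i)"
    and "\<forall>i\<in>{1,2,3}. continuous_on ({0..<Tm} \<times> {0..1}) (\<lambda>p. f i (fst p) (snd p))"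
    and "\<forall>i\<in>{1,2,3}. \<forall>t\<in>{0<..<Tm}. \<forall>x\<in>{0..1}. dx (f i) t x \<noteq> 0"
    and "\<forall>i\<in>{1,2,3}. \<forall>t\<in>{0<..<Tm}. \<forall>x\<in>{0..1}.
           dt (f i) t x = - nabla_s (f i) (nabla_s (f i) (kappa (f i))) t x
                          - (1/2 * (norm (kappa (f i) t x))\<^sup>2) *\<^sub>R kappa (f i) t x
                          + lam i *\<^sub>R kappa (f i) t x
                          + phi i t x *\<^sub>R ds (f i) (f i) t x"
    and "\<forall>i\<in>{1,2,3}. \<forall>t\<in>{0<..<Tm}. kappa (f i) t 0 = 0"
    and "f 1 0 0 = f 2 0 0" and "f 2 0 0 = f 3 0 0"
  shows "((\<forall>t\<in>{0<..<Tm}. f 1 t 0 = f 2 t 0 \<and> f 2 t 0 = f 3 t 0) \<longleftrightarrow>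
          (\<forall>t\<in>{0<..<Tm}. \<forall>i\<in>{1,2,3}. \<forall>j\<in>{1,2,3}. dt (f i) t 0 = dt (f j) t 0))
       \<and> ((\<forall>t\<in>{0<..<Tm}. f 1 t 0 = f 2 t 0 \<and> f 2 t 0 = f 3 t 0) \<longrightarrow>
          (\<forall>t\<in>{0<..<Tm}.
             (let A = (\<lambda>i. nabla_s (f i) (nabla_s (f i) (kappa (f i))) t 0);
                  T = (\<lambda>i. ds (f i) (f i) t 0)
              in Mmat (T 1) (T 2) (T 3) *v vector [phi 1 t 0, phi 2 t 0, phi 3 t 0]
                 = vector [- ((A 2 + A 3) \<bullet> T 1), - ((A 1 + A 3) \<bullet> T 2), - ((A 1 + A 2) \<bullet> T 3)])))
       \<and> (\<forall>T1 T2 T3 :: real^'n. norm T1 = 1 \<and> norm T2 = 1 \<and> norm T3 = 1 \<longrightarrow>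
           (let a = T1 \<bullet> T2; b = T2 \<bullet> T3; c = T1 \<bullet> T3 in
             det (Mmat T1 T2 T3) = 8 - 2 * (a\<^sup>2 + b\<^sup>2 + c\<^sup>2) - 2 * a * b * c
           \<and> 8 - 2 * (a\<^sup>2 + b\<^sup>2 + c\<^sup>2) - 2 * a * b * c \<ge> 2 * (1 - a * b * c)
           \<and> 2 * (1 - a * b * c) \<ge> 0
           \<and> (det (Mmat T1 T2 T3) = 0 \<longleftrightarrow>
                 (T1 = T2 \<and> T2 = T3) \<or> (T1 = T2 \<and> T3 = - T1)
               \<or> (T2 = T3 \<and> T1 = - T2) \<or> (T3 = T1 \<and> T2 = - T3))
           \<and> (dim (span {T1, T2, T3}) \<ge> 2 \<longrightarrow> pos_def_mat (Mmat T1 T2 T3))))"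
proof -
  let ?S = "{0<..<Tm}"
  have U0: "\<And>t. t \<in> ?S \<Longrightarrow> (t, 0) \<in> U" using assms(3) by auto
  have der: "\<And>i t. i \<in> {1,2,3} \<Longrightarrow> t \<in> ?S \<Longrightarrow> ((\<lambda>s. f i s 0) has_vector_derivative dt (f i) t 0) (at t)"
    using dt_deriv assms(4) U0 by blast
  have fwd: "dt (f i) t 0 = dt (f 1) t 0"
    if E: "\<forall>t\<in>?S. f 1 t 0 = f 2 t 0 \<and> f 2 t 0 = f 3 t 0" and i: "i \<in> {1,2,3}" and t: "t \<in> ?S" for i t
  proof -
    have "f 1 s 0 = f i s 0" if "s \<in> ?S" for s using E[rule_format, OF that] i by auto
    then have "((\<lambda>s. f i s 0) has_vector_derivative dt (f 1) t 0) (at t)"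
      using has_vector_derivative_transform_within_open[OF der[of 1 t] _ t] t by auto
    then show ?thesis using der[OF i t] vector_derivative_unique_at by blast
  qed
  have bwd: "f i t 0 = f 1 t 0"
    if D: "\<forall>t\<in>?S. \<forall>i\<in>{1,2,3}. \<forall>j\<in>{1,2,3}. dt (f i) t 0 = dt (f j) t 0"
      and i: "i \<in> {1,2,3}" and t: "t \<in> ?S" for i t
  proof -
    let ?h = "\<lambda>s. f i s 0 - f 1 s 0"
    have sub: "{0..t} \<subseteq> {0..<Tm}" using t by auto
    have c2: "continuous_on {0..t} (\<lambda>s. f k s 0)" if "k \<in> {1,2,3}" for k
    proof -
      have "continuous_on {0..t} (\<lambda>s. (s, 0::real))" by (intro continuous_intros)
      moreover have "(\<lambda>s. (s, 0::real)) ` {0..t} \<subseteq> {0..<Tm} \<times> {0..1}" using sub by auto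
      ultimately have "continuous_on {0..t} ((\<lambda>p. f k (fst p) (snd p)) \<circ> (\<lambda>s. (s, 0::real)))"
        using assms(5) that by (intro continuous_on_compose) (auto intro: continuous_on_subset)
      then show ?thesis by (simp add: o_def)
    qed
    have hc: "continuous_on {0..t} ?h" using c2[OF i] c2[of 1] by (intro continuous_intros) auto
    have h0: "?h 0 = 0" using assms(9,10) i by auto
    have hd: "(?h has_derivative (\<lambda>h. 0)) (at x within {0..t})" if x: "x \<in> {0..t} - {0, t}" for x
    proof -
      have xS: "x \<in> ?S" using x t by auto
      have "(?h has_vector_derivative (dt (f i) x 0 - dt (f 1) x 0)) (at x)"
        using der[OF i xS] der[of 1 x] xS by (intro derivative_intros) auto
      moreover have "dt (f i) x 0 - dt (f 1) x 0 = 0" using D[rule_format, OF xS i, of 1] by simp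
      ultimately have "(?h has_derivative (\<lambda>h. 0)) (at x)" by (simp add: has_vector_derivative_def)
      then show ?thesis by (rule has_derivative_at_withinI)
    qed
    have "?h t = 0"
      by (rule has_derivative_zero_unique_strong_interval[of "{0, t}" 0 t ?h 0 t]) (use hc h0 hd t in \<open>simp_all\<close>)
    then show ?thesis by simp
  qed
  have P1: "(\<forall>t\<in>?S. f 1 t 0 = f 2 t 0 \<and> f 2 t 0 = f 3 t 0) \<longleftrightarrow>
          (\<forall>t\<in>?S. \<forall>i\<in>{1,2,3}. \<forall>j\<in>{1,2,3}. dt (f i) t 0 = dt (f j) t 0)"
  proof
    assume E: "\<forall>t\<in>?S. f 1 t 0 = f 2 t 0 \<and> f 2 t 0 = f 3 t 0"
    show "\<forall>t\<in>?S. \<forall>i\<in>{1,2,3}. \<forall>j\<in>{1,2,3}. dt (f i) t 0 = dt (f j) t 0"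
    proof (intro ballI)
      fix t i j assume "t \<in> ?S" "i \<in> {1,2,3::nat}" "j \<in> {1,2,3::nat}"
      then show "dt (f i) t 0 = dt (f j) t 0" using fwd[OF E, of i t] fwd[OF E, of j t] by simp
    qed
  next
    assume D: "\<forall>t\<in>?S. \<forall>i\<in>{1,2,3}. \<forall>j\<in>{1,2,3}. dt (f i) t 0 = dt (f j) t 0"
    show "\<forall>t\<in>?S. f 1 t 0 = f 2 t 0 \<and> f 2 t 0 = f 3 t 0"
      using bwd[OF D, of 2] bwd[OF D, of 3] by auto
  qed
  have P2: "(let A = (\<lambda>i. nabla_s (f i) (nabla_s (f i) (kappa (f i))) t 0);
                  T = (\<lambda>i. ds (f i) (f i) t 0)
              in Mmat (T 1) (T 2) (T 3) *v vector [phi 1 t 0, phi 2 t 0, phi 3 t 0]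
                 = vector [- ((A 2 + A 3) \<bullet> T 1), - ((A 1 + A 3) \<bullet> T 2), - ((A 1 + A 2) \<bullet> T 3)])"
    if E: "\<forall>t\<in>?S. f 1 t 0 = f 2 t 0 \<and> f 2 t 0 = f 3 t 0" and t: "t \<in> ?S" for t
  proof -
    define A where "A = (\<lambda>i. nabla_s (f i) (nabla_s (f i) (kappa (f i))) t 0)"
    define T where "T = (\<lambda>i. ds (f i) (f i) t 0)"
    define p where "p = (\<lambda>i. phi i t 0)"
    define V where "V = dt (f 1) t 0"
    have u: "T i \<bullet> T i = 1" if "i \<in> {1,2,3}" for i
      using ds_unit[of "f i" t 0] assms(6) that t unfolding T_def by (auto simp: dot_square_norm)
    have pe: "A i \<bullet> T i = 0" if "i \<in> {1,2,3}" for i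
      using nabla_perp[OF ds_unit[of "f i" t 0]] assms(6) that t unfolding T_def A_def by auto
    have eq: "V = - A i + p i *\<^sub>R T i" if "i \<in> {1,2,3}" for i
    proof -
      have "V = dt (f i) t 0" using fwd[OF E that t] unfolding V_def by simp
      also have "\<dots> = - A i + p i *\<^sub>R T i"
      proof -
        have k: "kappa (f i) t 0 = 0" using assms(8) that t by blast
        have "dt (f i) t 0 = - nabla_s (f i) (nabla_s (f i) (kappa (f i))) t 0
                          - (1/2 * (norm (kappa (f i) t 0))\<^sup>2) *\<^sub>R kappa (f i) t 0
                          + lam i *\<^sub>R kappa (f i) t 0
                          + phi i t 0 *\<^sub>R ds (f i) (f i) t 0"
          using assms(7) that t by auto
        then show ?thesis unfolding A_def p_def T_def k by simp
      qed
      finally show ?thesis .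
    qed
    have vi: "V \<bullet> T j = - (A i \<bullet> T j) + p i * (T i \<bullet> T j)" if "i \<in> {1,2,3}" for i j
      using eq[OF that] by (simp add: inner_add_left inner_diff_left)
    have self: "V \<bullet> T i = p i" if "i \<in> {1,2,3}" for i
      using vi[OF that, of i] pe[OF that] u[OF that] by simp
    have c: "T 2 \<bullet> T 1 = T 1 \<bullet> T 2" "T 3 \<bullet> T 1 = T 1 \<bullet> T 3" "T 3 \<bullet> T 2 = T 2 \<bullet> T 3"
      by (simp_all add: inner_commute)
    have r1: "2 * p 1 - (T 1 \<bullet> T 2) * p 2 - (T 1 \<bullet> T 3) * p 3 = - ((A 2 + A 3) \<bullet> T 1)"
      using self[of 1] vi[of 2 1] vi[of 3 1] c by (simp add: inner_add_left algebra_simps)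
    have r2: "-(T 1 \<bullet> T 2) * p 1 + 2 * p 2 - (T 2 \<bullet> T 3) * p 3 = - ((A 1 + A 3) \<bullet> T 2)"
      using self[of 2] vi[of 1 2] vi[of 3 2] c by (simp add: inner_add_left algebra_simps)
    have r3: "-(T 1 \<bullet> T 3) * p 1 - (T 2 \<bullet> T 3) * p 2 + 2 * p 3 = - ((A 1 + A 2) \<bullet> T 3)"
      using self[of 3] vi[of 1 3] vi[of 2 3] c by (simp add: inner_add_left algebra_simps)
    have "Mmat (T 1) (T 2) (T 3) *v vector [p 1, p 2, p 3]
                 = vector [- ((A 2 + A 3) \<bullet> T 1), - ((A 1 + A 3) \<bullet> T 2), - ((A 1 + A 2) \<bullet> T 3)]"
      unfolding vec_eq_iff forall_3 Mmat_mult_comp using r1 r2 r3 by simp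
    then show ?thesis unfolding A_def T_def p_def Let_def .
  qed
  have P3: "(let a = T1 \<bullet> T2; b = T2 \<bullet> T3; c = T1 \<bullet> T3 in
             det (Mmat T1 T2 T3) = 8 - 2 * (a\<^sup>2 + b\<^sup>2 + c\<^sup>2) - 2 * a * b * c
           \<and> 8 - 2 * (a\<^sup>2 + b\<^sup>2 + c\<^sup>2) - 2 * a * b * c \<ge> 2 * (1 - a * b * c)
           \<and> 2 * (1 - a * b * c) \<ge> 0
           \<and> (det (Mmat T1 T2 T3) = 0 \<longleftrightarrow>
                 (T1 = T2 \<and> T2 = T3) \<or> (T1 = T2 \<and> T3 = - T1)
               \<or> (T2 = T3 \<and> T1 = - T2) \<or> (T3 = T1 \<and> T2 = - T3))
           \<and> (dim (span {T1, T2, T3}) \<ge> 2 \<longrightarrow> pos_def_mat (Mmat T1 T2 T3)))"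
    if n: "norm T1 = 1" "norm T2 = 1" "norm T3 = 1" for T1 T2 T3 :: "real^'n"
  proof -
    note ab = unit_inner_bounds[OF n(1,2)] and bc = unit_inner_bounds[OF n(2,3)] and ac = unit_inner_bounds[OF n(1,3)]
    note B = abs3[OF ab(1) bc(1) ac(1)]
    show ?thesis unfolding Let_def
      using det_Mmat[of T1 T2 T3] B(1,2) det_zero_iff[OF n] posdef_Mmat[OF n] by simp
  qed
  show ?thesis
  proof (intro conjI)
    show "(\<forall>t\<in>?S. f 1 t 0 = f 2 t 0 \<and> f 2 t 0 = f 3 t 0) \<longleftrightarrow>
          (\<forall>t\<in>?S. \<forall>i\<in>{1,2,3}. \<forall>j\<in>{1,2,3}. dt (f i) t 0 = dt (f j) t 0)" by (rule P1)
  next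
    show "(\<forall>t\<in>?S. f 1 t 0 = f 2 t 0 \<and> f 2 t 0 = f 3 t 0) \<longrightarrow>
          (\<forall>t\<in>?S.
             (let A = (\<lambda>i. nabla_s (f i) (nabla_s (f i) (kappa (f i))) t 0);
                  T = (\<lambda>i. ds (f i) (f i) t 0)
              in Mmat (T 1) (T 2) (T 3) *v vector [phi 1 t 0, phi 2 t 0, phi 3 t 0]
                 = vector [- ((A 2 + A 3) \<bullet> T 1), - ((A 1 + A 3) \<bullet> T 2), - ((A 1 + A 2) \<bullet> T 3)]))"
      using P2 by blast
  next
    show "(\<forall>T1 T2 T3 :: real^'n. norm T1 = 1 \<and> norm T2 = 1 \<and> norm T3 = 1 \<longrightarrow>
           (let a = T1 \<bullet> T2; b = T2 \<bullet> T3; c = T1 \<bullet> T3 in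
             det (Mmat T1 T2 T3) = 8 - 2 * (a\<^sup>2 + b\<^sup>2 + c\<^sup>2) - 2 * a * b * c
           \<and> 8 - 2 * (a\<^sup>2 + b\<^sup>2 + c\<^sup>2) - 2 * a * b * c \<ge> 2 * (1 - a * b * c)
           \<and> 2 * (1 - a * b * c) \<ge> 0
           \<and> (det (Mmat T1 T2 T3) = 0 \<longleftrightarrow>
                 (T1 = T2 \<and> T2 = T3) \<or> (T1 = T2 \<and> T3 = - T1)
               \<or> (T2 = T3 \<and> T1 = - T2) \<or> (T3 = T1 \<and> T2 = - T3))
           \<and> (dim (span {T1, T2, T3}) \<ge> 2 \<longrightarrow> pos_def_mat (Mmat T1 T2 T3))))"
      by (intro allI impI, elim conjE, rule P3; assumption)
  qed
qed

end
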